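(* Let $T$ be a rooted tree and $v$ a vertex of $T$. A vertex $u$ is the level successor of $v$ if and only if $u$ is the first vertex appearing after the last occurrence of $v$ in the Euler tour of $T$ such that $\mathrm{level}(u)\ge \mathrm{level}(v)$.
   Context: The level of the root $r$ is $0$, and each other vertex has level one more than its parent. The level successor of $v$ is the next vertex after $v$ in preorder that lies on the same level as $v$. The Euler tour of $T$ is the sequence of $2n-1$ vertices (where $n$ is the number of vertices) obtained by traversing $T$ depth-first starting and ending at the root, each tree edge traversed once downward and once upward, listing the current vertex initially and after every step. *)

theory Defs
  imports Main
begin

text \<open>Rooted (ordered) trees; vertices are identified with their labels,
  which are assumed pairwise distinct in the theorem.\<close>
datatype 'a rtree = Node 'a "'a rtree list"

fun preorder :: "'a rtree \<Rightarrow> 'a list" where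
  "preorder (Node a ts) = a # concat (map preorder ts)"

fun euler_tour :: "'a rtree \<Rightarrow> 'a list" where
  "euler_tour (Node a ts) = a # concat (map (\<lambda>t. euler_tour t @ [a]) ts)"

fun levels_from :: "nat \<Rightarrow> 'a rtree \<Rightarrow> ('a \<times> nat) list" where
  "levels_from d (Node a ts) = (a, d) # concat (map (levels_from (Suc d)) ts)"

definition level :: "'a rtree \<Rightarrow> 'a \<Rightarrow> nat" where
  "level T v = (THE d. (v, d) \<in> set (levels_from 0 T))"

definition level_successor :: "'a rtree \<Rightarrow> 'a \<Rightarrow> 'a \<Rightarrow> bool" where
  "level_successor T v u \<longleftrightarrow>
     (let P = preorder T in
      \<exists>i j. i < j \<and> j < length P \<and> P ! i = v \<and> P ! j = u \<and>
            level T u = level T v \<and>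
            (\<forall>k. i < k \<and> k < j \<longrightarrow> level T (P ! k) \<noteq> level T v))"

definition last_occ :: "'a rtree \<Rightarrow> 'a \<Rightarrow> nat" where
  "last_occ T v = Max {i. i < length (euler_tour T) \<and> euler_tour T ! i = v}"

definition first_after_last_occ :: "'a rtree \<Rightarrow> 'a \<Rightarrow> 'a \<Rightarrow> bool" where
  "first_after_last_occ T v u \<longleftrightarrow>
     (let E = euler_tour T; p = last_occ T v in
      \<exists>q. p < q \<and> q < length E \<and> E ! q = u \<and> level T u \<ge> level T v \<and>
          (\<forall>k. p < k \<and> k < q \<longrightarrow> level T (E ! k) < level T v))"

end

theory Submission
  imports Defs
begin

fun el :: "nat \<Rightarrow> 'a rtree \<Rightarrow> ('a \<times> nat) list" where
  "el d (Node a ts) = (a, d) # concat (map (\<lambda>t. el (Suc d) t @ [(a, d)]) ts)"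

lemma find_app: "find P (xs @ ys) = (case find P xs of None \<Rightarrow> find P ys | Some x \<Rightarrow> Some x)"
  by (induction xs) auto

lemma fst_lf: "map fst (levels_from d t) = preorder t"
proof (induction t arbitrary: d)
  case (Node a ts)
  then show ?case by (auto simp: map_concat intro!: arg_cong[where f=concat])
qed

lemma fst_el: "map fst (el d t) = euler_tour t"
proof (induction t arbitrary: d)
  case (Node a ts)
  then show ?case by (auto simp: map_concat intro!: arg_cong[where f=concat])
qed

lemma set_el: "set (el d t) \<subseteq> set (levels_from d t)"
proof (induction t arbitrary: d)
  case (Node a ts)
  then show ?case apply (simp add: subset_iff) by blast
qed

lemma lf_ge: "p \<in> set (levels_from d t) \<Longrightarrow> d \<le> snd p"
proof (induction t arbitrary: d)
  case (Node a ts)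
  then show ?case by (fastforce dest: Suc_leD)
qed

lemma el_ne: "el d t \<noteq> []"
  by (cases t) auto

lemma last_el: "last (el d (Node a ts)) = (a, d)"
  by (cases ts rule: rev_cases) auto

lemma tree_find:
  "d \<le> L \<Longrightarrow> find (\<lambda>p. L \<le> snd p) (levels_from d t) = find (\<lambda>p. L \<le> snd p) (el d t)
     \<and> find (\<lambda>p. snd p = L) (levels_from d t) = find (\<lambda>p. L \<le> snd p) (levels_from d t)"
proof (induction t arbitrary: d)
  case (Node a ts)
  show ?case
  proof (cases "d = L")
    case True then show ?thesis by simp
  next
    case False
    with Node.prems have dL: "Suc d \<le> L" by simp
    define F where "F ts' \<longleftrightarrow>
      find (\<lambda>p. L \<le> snd p) (concat (map (levels_from (Suc d)) ts')) =
        find (\<lambda>p. L \<le> snd p) (concat (map (\<lambda>t. el (Suc d) t @ [(a, d)]) ts'))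
      \<and> find (\<lambda>p. snd p = L) (concat (map (levels_from (Suc d)) ts')) =
        find (\<lambda>p. L \<le> snd p) (concat (map (levels_from (Suc d)) ts'))" for ts'
    have "set ts' \<subseteq> set ts \<Longrightarrow> F ts'" for ts'
    proof (induction ts')
      case Nil then show ?case by (simp add: F_def)
    next
      case (Cons t ts')
      then have IHt: "find (\<lambda>p. L \<le> snd p) (levels_from (Suc d) t) = find (\<lambda>p. L \<le> snd p) (el (Suc d) t)
            \<and> find (\<lambda>p. snd p = L) (levels_from (Suc d) t) = find (\<lambda>p. L \<le> snd p) (levels_from (Suc d) t)"
        using Node.IH dL by auto
      have IHr: "F ts'" using Cons by auto
      show ?case
        using IHt IHr False Node.prems unfolding F_def
        by (auto simp: find_app split: option.splits)
    qed
    from this[of ts] have "F ts" by simp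
    then show ?thesis using False Node.prems unfolding F_def by simp
  qed
qed


lemma forest_find:
  assumes "d < L"
  shows "find (\<lambda>p. L \<le> snd p) (concat (map (levels_from (Suc d)) ys)) =
        find (\<lambda>p. L \<le> snd p) (concat (map (\<lambda>t. el (Suc d) t @ [(a, d)]) ys))
      \<and> find (\<lambda>p. snd p = L) (concat (map (levels_from (Suc d)) ys)) =
        find (\<lambda>p. L \<le> snd p) (concat (map (levels_from (Suc d)) ys))"
  using tree_find[of d L "Node a ys"] assms by simp

lemma fst_el_sub: "fst ` set (el d t) \<subseteq> set (preorder t)"
proof -
  have "fst ` set (el d t) \<subseteq> fst ` set (levels_from d t)" using set_el by blast
  also have "\<dots> = set (preorder t)" using fst_lf[of d t] by (metis set_map)
  finally show ?thesis .
qed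

lemma path:
  "distinct (preorder t) \<Longrightarrow> v \<in> set (preorder t) \<Longrightarrow>
   \<exists>A B E1 E2 L ts'. levels_from d t = A @ levels_from L (Node v ts') @ B
     \<and> el d t = E1 @ el L (Node v ts') @ E2 \<and> d \<le> L
     \<and> find (\<lambda>p. L \<le> snd p) B = find (\<lambda>p. L \<le> snd p) E2
     \<and> find (\<lambda>p. snd p = L) B = find (\<lambda>p. L \<le> snd p) B
     \<and> v \<notin> fst ` set E2"
proof (induction t arbitrary: d)
  case (Node a ts)
  show ?case
  proof (cases "v = a")
    case True
    show ?thesis
      by (rule exI[of _ "[]"], rule exI[of _ "[]"], rule exI[of _ "[]"], rule exI[of _ "[]"],
          rule exI[of _ d], rule exI[of _ ts]) (simp add: True)
  next
    case False
    with Node.prems obtain t where t: "t \<in> set ts" "v \<in> set (preorder t)" by auto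
    then obtain xs ys where ts: "ts = xs @ t # ys" by (meson split_list)
    have dist: "distinct (preorder t)" using Node.prems(1) t(1)
      by (auto simp: distinct_concat_iff)
    obtain A B E1 E2 L ts' where
      h1: "levels_from (Suc d) t = A @ levels_from L (Node v ts') @ B" and
      h2: "el (Suc d) t = E1 @ el L (Node v ts') @ E2" and
      h3: "Suc d \<le> L" and
      h4: "find (\<lambda>p. L \<le> snd p) B = find (\<lambda>p. L \<le> snd p) E2" and
      h5: "find (\<lambda>p. snd p = L) B = find (\<lambda>p. L \<le> snd p) B" and
      h6: "v \<notin> fst ` set E2"
      using Node.IH[OF t(1) dist t(2), of "Suc d"] by blast
    have dL: "d < L" using h3 by simp
    note ff = forest_find[OF dL, of ys a]
    let ?C = "concat (map (levels_from (Suc d)) ys)"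
    let ?C' = "concat (map (\<lambda>t. el (Suc d) t @ [(a, d)]) ys)"
    have va: "v \<noteq> a" by fact
    have vys: "v \<notin> fst ` set ?C'"
    proof
      assume "v \<in> fst ` set ?C'"
      then have "\<exists>s\<in>set ys. v \<in> fst ` set (el (Suc d) s)" using va
        by (cases "ys = []") auto
      then obtain s where s: "s \<in> set ys" "v \<in> fst ` set (el (Suc d) s)" by blast
      then have vs: "v \<in> set (preorder s)" using fst_el_sub by (meson subsetD)
      have "distinct (concat (map preorder xs) @ preorder t @ concat (map preorder ys))"
        using Node.prems(1) ts by simp
      then have "set (preorder t) \<inter> (\<Union>s\<in>set ys. set (preorder s)) = {}"
        by (simp only: distinct_append set_concat set_map) auto
      then show False using t(2) s(1) vs by blast
    qed
    show ?thesis
    proof (intro exI conjI)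
      show "levels_from d (Node a ts) = ((a,d) # concat (map (levels_from (Suc d)) xs) @ A)
             @ levels_from L (Node v ts') @ (B @ ?C)"
        using h1 ts by simp
      show "el d (Node a ts) = ((a,d) # concat (map (\<lambda>t. el (Suc d) t @ [(a, d)]) xs) @ E1)
             @ el L (Node v ts') @ (E2 @ [(a,d)] @ ?C')"
        using h2 ts by simp
      show "d \<le> L" using dL by simp
      show "find (\<lambda>p. L \<le> snd p) (B @ ?C) = find (\<lambda>p. L \<le> snd p) (E2 @ [(a,d)] @ ?C')"
        using h4 ff dL by (auto simp: find_app split: option.splits)
      show "find (\<lambda>p. snd p = L) (B @ ?C) = find (\<lambda>p. L \<le> snd p) (B @ ?C)"
        using h5 ff dL by (auto simp: find_app split: option.splits)
      show "v \<notin> fst ` set (E2 @ [(a,d)] @ ?C')"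
        unfolding set_append image_Un using h6 va vys by simp
    qed
  qed
qed


lemma level_eq:
  assumes "distinct (preorder T)" "(x, l) \<in> set (levels_from 0 T)"
  shows "level T x = l"
  unfolding level_def
proof (rule the_equality)
  show "(x, l) \<in> set (levels_from 0 T)" by fact
  fix l' assume h: "(x, l') \<in> set (levels_from 0 T)"
  have d: "distinct (map fst (levels_from 0 T))" using assms(1) by (simp add: fst_lf)
  have "inj_on fst (set (levels_from 0 T))" using d by (simp add: distinct_map)
  from inj_onD[OF this _ h assms(2)] show "l' = l" by simp
qed

lemma G1:
  assumes "i0 < length xs" "\<forall>k<length xs. lv (fst (xs!k)) = snd (xs!k)"
  shows "(\<exists>j. i0 < j \<and> j < length xs \<and> fst (xs!j) = u \<and> lv u = snd (xs!i0) \<and>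
            (\<forall>k. i0 < k \<and> k < j \<longrightarrow> lv (fst (xs!k)) \<noteq> snd (xs!i0)))
     \<longleftrightarrow> find (\<lambda>p. snd p = snd (xs!i0)) (drop (Suc i0) xs) = Some (u, snd (xs!i0))"
  (is "?L \<longleftrightarrow> ?R")
proof
  have lvk: "\<And>k. k < length xs \<Longrightarrow> lv (fst (xs!k)) = snd (xs!k)" using assms(2) by blast
  have le: "Suc i0 \<le> length xs" using assms(1) by simp
  assume ?L
  then obtain j where j: "i0 < j" "j < length xs" "fst (xs!j) = u" "lv u = snd (xs!i0)"
    "\<forall>k. i0 < k \<and> k < j \<longrightarrow> lv (fst (xs!k)) \<noteq> snd (xs!i0)" by blast
  have sj: "snd (xs!j) = snd (xs!i0)" using j(2,3,4) lvk[of j] by simp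
  have xj: "xs ! j = (u, snd (xs!i0))" using j(3) sj by (metis prod.collapse)
  have jj: "Suc i0 + (j - Suc i0) = j" using j(1) by simp
  show ?R unfolding find_Some_iff
  proof (intro exI[of _ "j - Suc i0"] conjI allI impI)
    show "j - Suc i0 < length (drop (Suc i0) xs)" using j by simp
    show "snd (drop (Suc i0) xs ! (j - Suc i0)) = snd (xs ! i0)"
      using sj jj by (simp only: nth_drop[OF le])
    show "(u, snd (xs ! i0)) = drop (Suc i0) xs ! (j - Suc i0)"
      using xj jj by (simp only: nth_drop[OF le])
    fix k assume k: "k < j - Suc i0"
    have "lv (fst (xs!(Suc i0 + k))) \<noteq> snd (xs!i0)" using j(5) k by simp
    moreover have "Suc i0 + k < length xs" using j k by simp
    ultimately have "snd (xs!(Suc i0 + k)) \<noteq> snd (xs!i0)" using lvk by simp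
    then show "snd (drop (Suc i0) xs ! k) \<noteq> snd (xs ! i0)" by (subst nth_drop[OF le])
  qed
next
  have lvk: "\<And>k. k < length xs \<Longrightarrow> lv (fst (xs!k)) = snd (xs!k)" using assms(2) by blast
  have le: "Suc i0 \<le> length xs" using assms(1) by simp
  assume ?R
  then obtain i where i: "i < length (drop (Suc i0) xs)" "(u, snd (xs!i0)) = drop (Suc i0) xs ! i"
    "\<forall>j<i. snd (drop (Suc i0) xs ! j) \<noteq> snd (xs!i0)"
    unfolding find_Some_iff by auto
  have xi: "xs ! (Suc i0 + i) = (u, snd (xs!i0))" using i(2) by (simp only: nth_drop[OF le])
  have il: "Suc i0 + i < length xs" using i(1) by simp
  show ?L
  proof (intro exI[of _ "Suc i0 + i"] conjI allI impI)
    show "i0 < Suc i0 + i" by simp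
    show "Suc i0 + i < length xs" by fact
    show "fst (xs ! (Suc i0 + i)) = u" using xi by simp
    show "lv u = snd (xs ! i0)" using xi lvk[OF il] by simp
    fix k assume k: "i0 < k \<and> k < Suc i0 + i"
    then have "k - Suc i0 < i" by arith
    then have "snd (drop (Suc i0) xs ! (k - Suc i0)) \<noteq> snd (xs!i0)" using i(3) by blast
    moreover have "drop (Suc i0) xs ! (k - Suc i0) = xs ! k"
      using k nth_drop[OF le, of "k - Suc i0"] by simp
    ultimately have "snd (xs ! k) \<noteq> snd (xs!i0)" by simp
    then show "lv (fst (xs ! k)) \<noteq> snd (xs ! i0)" using k il lvk[of k] by simp
  qed
qed

lemma G2:
  fixes lv :: "'a \<Rightarrow> nat" and ys :: "('a \<times> nat) list"
  assumes "\<forall>k<length ys. lv (fst (ys!k)) = snd (ys!k)"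
  shows "(\<exists>q. p < q \<and> q < length ys \<and> fst (ys!q) = u \<and> L \<le> lv u \<and>
            (\<forall>k. p < k \<and> k < q \<longrightarrow> lv (fst (ys!k)) < L))
     \<longleftrightarrow> (\<exists>l. find (\<lambda>p. L \<le> snd p) (drop (Suc p) ys) = Some (u, l))"
  (is "?L \<longleftrightarrow> ?R")
proof
  have lvk: "\<And>k. k < length ys \<Longrightarrow> lv (fst (ys!k)) = snd (ys!k)" using assms by blast
  assume ?L
  then obtain q where q: "p < q" "q < length ys" "fst (ys!q) = u" "L \<le> lv u"
    "\<forall>k. p < k \<and> k < q \<longrightarrow> lv (fst (ys!k)) < L" by blast
  have le: "Suc p \<le> length ys" using q by simp
  have sq: "L \<le> snd (ys!q)" using q(2,3,4) lvk[of q] by simp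
  have xq: "ys ! q = (u, snd (ys!q))" using q(3) by (metis prod.collapse)
  have dq: "drop (Suc p) ys ! (q - Suc p) = ys ! q" using q(1) nth_drop[OF le, of "q - Suc p"] by simp
  show ?R unfolding find_Some_iff
  proof (rule exI[of _ "snd (ys!q)"], rule exI[of _ "q - Suc p"], intro conjI allI impI)
    show "q - Suc p < length (drop (Suc p) ys)" using q by simp
    show "L \<le> snd (drop (Suc p) ys ! (q - Suc p))" using dq sq by simp
    show "(u, snd (ys ! q)) = drop (Suc p) ys ! (q - Suc p)" using dq xq by simp
    fix k assume k: "k < q - Suc p"
    have "lv (fst (ys!(Suc p + k))) < L" using q(5) k by simp
    moreover have "Suc p + k < length ys" using q k by simp
    ultimately have "\<not> L \<le> snd (ys!(Suc p + k))" using lvk by (simp add: not_le)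
    moreover have "drop (Suc p) ys ! k = ys ! (Suc p + k)" using nth_drop[OF le, of k] by simp
    ultimately show "\<not> L \<le> snd (drop (Suc p) ys ! k)" by simp
  qed
next
  have lvk: "\<And>k. k < length ys \<Longrightarrow> lv (fst (ys!k)) = snd (ys!k)" using assms by blast
  assume ?R
  then obtain l i where i: "i < length (drop (Suc p) ys)" "L \<le> snd (drop (Suc p) ys ! i)"
    "(u, l) = drop (Suc p) ys ! i"
    "\<forall>j<i. \<not> L \<le> snd (drop (Suc p) ys ! j)"
    unfolding find_Some_iff by blast
  have le: "Suc p \<le> length ys" using i(1) by simp
  have di: "drop (Suc p) ys ! i = ys ! (Suc p + i)" using nth_drop[OF le, of i] by simp
  have yi: "ys ! (Suc p + i) = (u, l)" using i(3) di by simp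
  have il: "Suc p + i < length ys" using i(1) by simp
  show ?L
  proof (intro exI[of _ "Suc p + i"] conjI allI impI)
    show "p < Suc p + i" by simp
    show "Suc p + i < length ys" by fact
    show "fst (ys ! (Suc p + i)) = u" using yi by simp
    have "lv u = l" using yi lvk[OF il] by simp
    then show "L \<le> lv u" using i(2) di yi by simp
    fix k assume k: "p < k \<and> k < Suc p + i"
    then have "k - Suc p < i" by arith
    then have "\<not> L \<le> snd (drop (Suc p) ys ! (k - Suc p))" using i(4) by blast
    moreover have "drop (Suc p) ys ! (k - Suc p) = ys ! k"
      using k nth_drop[OF le, of "k - Suc p"] by simp
    ultimately have "\<not> L \<le> snd (ys ! k)" by simp
    then show "lv (fst (ys ! k)) < L" using k il lvk[of k] by simp
  qed
qed

lemma map_fst_ex: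
  "(\<exists>q. p < q \<and> q < length ys \<and> map fst ys ! q = u \<and> R \<and> (\<forall>k. p < k \<and> k < q \<longrightarrow> Q (map fst ys ! k)))
   \<longleftrightarrow> (\<exists>q. p < q \<and> q < length ys \<and> fst (ys ! q) = u \<and> R \<and> (\<forall>k. p < k \<and> k < q \<longrightarrow> Q (fst (ys ! k))))"
proof (rule ex_cong1)
  fix q
  show "(p < q \<and> q < length ys \<and> map fst ys ! q = u \<and> R \<and> (\<forall>k. p < k \<and> k < q \<longrightarrow> Q (map fst ys ! k))) =
    (p < q \<and> q < length ys \<and> fst (ys ! q) = u \<and> R \<and> (\<forall>k. p < k \<and> k < q \<longrightarrow> Q (fst (ys ! k))))"
  proof (cases "q < length ys")
    case True
    then have "\<forall>k. k < q \<longrightarrow> map fst ys ! k = fst (ys ! k)" by simp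
    then show ?thesis using True by auto
  qed simp
qed

lemma find_P: "find P xs = Some x \<Longrightarrow> P x"
  unfolding find_Some_iff by auto

theorem mainTheorem6:
  fixes T :: "'a rtree" and u v :: 'a
  assumes "distinct (preorder T)"
    and "v \<in> set (preorder T)"
  shows "level_successor T v u \<longleftrightarrow> first_after_last_occ T v u"
proof -
  let ?LF = "levels_from 0 T"
  let ?EL = "el 0 T"
  obtain A B E1 E2 L ts' where
    p1: "?LF = A @ levels_from L (Node v ts') @ B" and
    p2: "?EL = E1 @ el L (Node v ts') @ E2" and
    p4: "find (\<lambda>p. L \<le> snd p) B = find (\<lambda>p. L \<le> snd p) E2" and
    p5: "find (\<lambda>p. snd p = L) B = find (\<lambda>p. L \<le> snd p) B" and
    p6: "v \<notin> fst ` set E2"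
    using path[OF assms, of 0] by blast
  have P: "preorder T = map fst ?LF" by (simp add: fst_lf)
  have E: "euler_tour T = map fst ?EL" by (simp add: fst_el)
  have lvLF: "\<forall>k<length ?LF. level T (fst (?LF!k)) = snd (?LF!k)"
  proof (intro allI impI)
    fix k assume "k < length ?LF"
    then have "(fst (?LF!k), snd (?LF!k)) \<in> set ?LF" by simp
    then show "level T (fst (?LF!k)) = snd (?LF!k)" by (rule level_eq[OF assms(1)])
  qed
  have lvEL: "\<forall>k<length ?EL. level T (fst (?EL!k)) = snd (?EL!k)"
  proof (intro allI impI)
    fix k assume "k < length ?EL"
    then have "(fst (?EL!k), snd (?EL!k)) \<in> set ?EL" by simp
    then have "(fst (?EL!k), snd (?EL!k)) \<in> set ?LF" using set_el by blast
    then show "level T (fst (?EL!k)) = snd (?EL!k)" by (rule level_eq[OF assms(1)])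
  qed
  define i0 where "i0 = length A"
  have LFi0: "?LF ! i0 = (v, L)" using p1 by (simp add: i0_def)
  have i0l: "i0 < length ?LF" using p1 by (simp add: i0_def)
  have lvv: "level T v = L"
  proof -
    have "level T (fst (?LF!i0)) = snd (?LF!i0)" using lvLF i0l by blast
    then show ?thesis using LFi0 by simp
  qed
  have dropLF: "drop (Suc i0) ?LF = concat (map (levels_from (Suc L)) ts') @ B"
    using p1 by (simp add: i0_def)
  have noneS: "find (\<lambda>p. snd p = L) (concat (map (levels_from (Suc L)) ts')) = None"
    unfolding find_None_iff
  proof
    assume "\<exists>x. x \<in> set (concat (map (levels_from (Suc L)) ts')) \<and> snd x = L"
    then obtain x t where "t \<in> set ts'" "x \<in> set (levels_from (Suc L) t)" "snd x = L" by auto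
    then show False using lf_ge by fastforce
  qed
  have distP: "distinct (map fst ?LF)" using assms(1) P by simp
  have LS: "level_successor T v u \<longleftrightarrow> find (\<lambda>p. snd p = L) B = Some (u, L)"
  proof -
    have "level_successor T v u \<longleftrightarrow>
      (\<exists>j. i0 < j \<and> j < length ?LF \<and> map fst ?LF ! j = u \<and> level T u = L \<and>
         (\<forall>k. i0 < k \<and> k < j \<longrightarrow> level T (map fst ?LF ! k) \<noteq> L))"
      unfolding level_successor_def Let_def P lvv
    proof
      assume "\<exists>i j. i < j \<and> j < length (map fst ?LF) \<and> map fst ?LF ! i = v \<and> map fst ?LF ! j = u \<and>
        level T u = L \<and> (\<forall>k. i < k \<and> k < j \<longrightarrow> level T (map fst ?LF ! k) \<noteq> L)"
      then obtain i j where ij: "i < j" "j < length (map fst ?LF)" "map fst ?LF ! i = v" "map fst ?LF ! j = u"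
        "level T u = L" "\<forall>k. i < k \<and> k < j \<longrightarrow> level T (map fst ?LF ! k) \<noteq> L" by blast
      have "map fst ?LF ! i0 = v" using LFi0 i0l by simp
      moreover have "i < length (map fst ?LF)" using ij(1,2) by simp
      ultimately have "i = i0" using ij(3) i0l nth_eq_iff_index_eq[OF distP, of i i0] by simp
      then show "\<exists>j. i0 < j \<and> j < length ?LF \<and> map fst ?LF ! j = u \<and> level T u = L \<and>
         (\<forall>k. i0 < k \<and> k < j \<longrightarrow> level T (map fst ?LF ! k) \<noteq> L)" using ij by auto
    next
      assume "\<exists>j. i0 < j \<and> j < length ?LF \<and> map fst ?LF ! j = u \<and> level T u = L \<and>
         (\<forall>k. i0 < k \<and> k < j \<longrightarrow> level T (map fst ?LF ! k) \<noteq> L)"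
      moreover have "map fst ?LF ! i0 = v" using LFi0 i0l by simp
      ultimately show "\<exists>i j. i < j \<and> j < length (map fst ?LF) \<and> map fst ?LF ! i = v \<and> map fst ?LF ! j = u \<and>
        level T u = L \<and> (\<forall>k. i < k \<and> k < j \<longrightarrow> level T (map fst ?LF ! k) \<noteq> L)" by auto
    qed
    also have "\<dots> \<longleftrightarrow>
      (\<exists>j. i0 < j \<and> j < length ?LF \<and> fst (?LF ! j) = u \<and> level T u = L \<and>
         (\<forall>k. i0 < k \<and> k < j \<longrightarrow> level T (fst (?LF ! k)) \<noteq> L))"
      by (rule map_fst_ex)
    also have "\<dots> \<longleftrightarrow> find (\<lambda>p. snd p = L) (drop (Suc i0) ?LF) = Some (u, L)"
      using G1[OF i0l lvLF, of u] LFi0 by simp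
    also have "\<dots> \<longleftrightarrow> find (\<lambda>p. snd p = L) B = Some (u, L)"
      using dropLF noneS by (simp add: find_app)
    finally show ?thesis .
  qed
  define p where "p = length E1 + length (el L (Node v ts')) - 1"
  have ne: "el L (Node v ts') \<noteq> []" by (rule el_ne)
  have Sp: "Suc p = length E1 + length (el L (Node v ts'))" using ne by (simp add: p_def)
  have pl: "p < length ?EL" using p2 Sp by simp
  have ELp: "?EL ! p = (v, L)"
  proof -
    have e: "?EL = (E1 @ el L (Node v ts')) @ E2" using p2 by simp
    have "p < length (E1 @ el L (Node v ts'))" using Sp by simp
    then have "?EL ! p = (E1 @ el L (Node v ts')) ! p" unfolding e by (rule nth_append_left)
    also have "\<dots> = last (E1 @ el L (Node v ts'))" using Sp ne
      by (simp add: last_conv_nth)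
    also have "\<dots> = last (el L (Node v ts'))" using ne by simp
    also have "\<dots> = (v, L)" by (rule last_el)
    finally show ?thesis .
  qed
  have dropEL: "drop (Suc p) ?EL = E2" using p2 Sp by simp
  have lastocc: "last_occ T v = p"
    unfolding last_occ_def E
  proof (rule Max_eqI)
    show "finite {i. i < length (map fst ?EL) \<and> map fst ?EL ! i = v}" by simp
    show "p \<in> {i. i < length (map fst ?EL) \<and> map fst ?EL ! i = v}" using pl ELp by simp
    fix i assume i: "i \<in> {i. i < length (map fst ?EL) \<and> map fst ?EL ! i = v}"
    show "i \<le> p"
    proof (rule ccontr)
      assume "\<not> i \<le> p"
      then have ip: "Suc p \<le> i" by simp
      have il: "i < length ?EL" using i by simp
      have "?EL ! i = E2 ! (i - Suc p)"
        using nth_drop[of "Suc p" ?EL "i - Suc p"] ip il dropEL by simp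
      moreover have "i - Suc p < length E2"
      proof -
        have "length E2 = length ?EL - Suc p" using arg_cong[OF dropEL, of length] by simp
        then show ?thesis using il ip by simp
      qed
      ultimately have "fst (?EL ! i) \<in> fst ` set E2" using nth_mem by (simp add: image_iff) blast
      moreover have "fst (?EL ! i) = v" using i il by simp
      ultimately show False using p6 by simp
    qed
  qed
  have FA: "first_after_last_occ T v u \<longleftrightarrow> (\<exists>l. find (\<lambda>p. L \<le> snd p) E2 = Some (u, l))"
  proof -
    have "first_after_last_occ T v u \<longleftrightarrow>
      (\<exists>q. p < q \<and> q < length ?EL \<and> map fst ?EL ! q = u \<and> L \<le> level T u \<and>
         (\<forall>k. p < k \<and> k < q \<longrightarrow> level T (map fst ?EL ! k) < L))"
      unfolding first_after_last_occ_def Let_def E lastocc lvv by simp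
    also have "\<dots> \<longleftrightarrow>
      (\<exists>q. p < q \<and> q < length ?EL \<and> fst (?EL ! q) = u \<and> L \<le> level T u \<and>
         (\<forall>k. p < k \<and> k < q \<longrightarrow> level T (fst (?EL ! k)) < L))"
      by (rule map_fst_ex)
    also have "\<dots> \<longleftrightarrow> (\<exists>l. find (\<lambda>p. L \<le> snd p) (drop (Suc p) ?EL) = Some (u, l))"
      by (rule G2[OF lvEL])
    finally show ?thesis using dropEL by simp
  qed
  show ?thesis
  proof
    assume "level_successor T v u"
    then show "first_after_last_occ T v u" using LS FA p4 p5 by auto
  next
    assume "first_after_last_occ T v u"
    then obtain l where l: "find (\<lambda>p. L \<le> snd p) E2 = Some (u, l)" using FA by blast
    then have "find (\<lambda>p. snd p = L) B = Some (u, l)" using p4 p5 by simp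
    moreover from this have "l = L" using find_P by fastforce
    ultimately show "level_successor T v u" using LS by simp
  qed
qed

end
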